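(* Let $R$ be a commutative ring such that for every $a\in R$, either $a$ or $1-a$ is a stable element. Then $R$ is locally stable.
   Context: All rings are commutative with identity. A ring $S$ has stable range 1 if whenever $a,b\in S$ with $aS+bS=S$ there is $y\in S$ with $a+by$ a unit. An element $a\in R$ is stable if the ring $R/aR$ has stable range 1. $R$ is locally stable if whenever $a,b\in R$ with $aR+bR=R$ there is $y\in R$ such that $a+by$ is stable. *)

theory Defs
  imports "HOL-Algebra.Algebra"
begin

definition stable_range_one :: "('a, 'b) ring_scheme \<Rightarrow> bool" where
  "stable_range_one S \<longleftrightarrow>
     (\<forall>a \<in> carrier S. \<forall>b \<in> carrier S.
        (\<exists>x \<in> carrier S. \<exists>z \<in> carrier S. a \<otimes>\<^bsub>S\<^esub> x \<oplus>\<^bsub>S\<^esub> b \<otimes>\<^bsub>S\<^esub> z = \<one>\<^bsub>S\<^esub>)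
        \<longrightarrow> (\<exists>y \<in> carrier S. a \<oplus>\<^bsub>S\<^esub> b \<otimes>\<^bsub>S\<^esub> y \<in> Units S))"

definition stable_elem :: "('a, 'b) ring_scheme \<Rightarrow> 'a \<Rightarrow> bool" where
  "stable_elem R a \<longleftrightarrow> stable_range_one (R Quot (PIdl\<^bsub>R\<^esub> a))"

definition locally_stable :: "('a, 'b) ring_scheme \<Rightarrow> bool" where
  "locally_stable R \<longleftrightarrow>
     (\<forall>a \<in> carrier R. \<forall>b \<in> carrier R.
        (\<exists>x \<in> carrier R. \<exists>z \<in> carrier R. a \<otimes>\<^bsub>R\<^esub> x \<oplus>\<^bsub>R\<^esub> b \<otimes>\<^bsub>R\<^esub> z = \<one>\<^bsub>R\<^esub>)
        \<longrightarrow> (\<exists>y \<in> carrier R. stable_elem R (a \<oplus>\<^bsub>R\<^esub> b \<otimes>\<^bsub>R\<^esub> y)))"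

end

theory Submission
  imports Defs
begin

lemma quot_carr:
  fixes R (structure)
  assumes "Xq \<in> carrier (R Quot I)"
  shows "\<exists>x\<in>carrier R. Xq = I +>\<^bsub>R\<^esub> x"
  using assms unfolding FactRing_def A_RCOSETS_def'[of R I] by auto

lemma quot_ops:
  fixes R (structure)
  assumes "cring R" "ideal I R" "x \<in> carrier R" "y \<in> carrier R"
  shows "(I +>\<^bsub>R\<^esub> x) \<otimes>\<^bsub>R Quot I\<^esub> (I +>\<^bsub>R\<^esub> y) = I +>\<^bsub>R\<^esub> (x \<otimes>\<^bsub>R\<^esub> y)"
    "(I +>\<^bsub>R\<^esub> x) \<oplus>\<^bsub>R Quot I\<^esub> (I +>\<^bsub>R\<^esub> y) = I +>\<^bsub>R\<^esub> (x \<oplus>\<^bsub>R\<^esub> y)"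
    "\<one>\<^bsub>R Quot I\<^esub> = I +>\<^bsub>R\<^esub> \<one>\<^bsub>R\<^esub>"
    "I +>\<^bsub>R\<^esub> x \<in> carrier (R Quot I)"
  using assms ideal.rcoset_mult_add[OF assms(2)] ideal.a_rcos_sum[OF assms(2)]
  unfolding FactRing_def A_RCOSETS_def'[of R I] by auto

lemma quot_eq:
  fixes R (structure)
  assumes "cring R" "ideal I R" "x \<in> carrier R" "y \<in> carrier R"
  shows "(I +>\<^bsub>R\<^esub> x = I +>\<^bsub>R\<^esub> y) \<longleftrightarrow> x \<ominus>\<^bsub>R\<^esub> y \<in> I"
  using ring.quotient_eq_iff_same_a_r_cos[of R I x y] assms cring.axioms(1) by blast

lemma quot_unit:
  fixes R (structure)
  assumes "cring R" "ideal I R" "u \<in> carrier R" "w \<in> carrier R"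
    and "u \<otimes>\<^bsub>R\<^esub> w \<ominus>\<^bsub>R\<^esub> \<one>\<^bsub>R\<^esub> \<in> I"
  shows "I +>\<^bsub>R\<^esub> u \<in> Units (R Quot I)"
proof -
  interpret cring R by fact
  have e: "I +> (u \<otimes> w) = I +> \<one>" using quot_eq[OF assms(1,2)] assms by simp
  have c: "cring (R Quot I)" using ideal.quotient_is_cring[OF assms(2)] assms(1) by simp
  have "(I +> u) \<otimes>\<^bsub>R Quot I\<^esub> (I +> w) = \<one>\<^bsub>R Quot I\<^esub>"
    using quot_ops[OF assms(1,2) assms(3,4)] e by simp
  moreover have "(I +> w) \<otimes>\<^bsub>R Quot I\<^esub> (I +> u) = \<one>\<^bsub>R Quot I\<^esub>"
    using calculation cring.cring_simprules(14)[OF c] quot_ops[OF assms(1,2) assms(3,4)]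
      quot_ops[OF assms(1,2) assms(4,3)] by metis
  ultimately show ?thesis unfolding Units_def
    using quot_ops[OF assms(1,2) assms(3,4)] quot_ops[OF assms(1,2) assms(4,3)] by blast
qed

lemma sr_mono:
  fixes R (structure)
  assumes R: "cring R" and I: "ideal I R" and J: "ideal J R" and JI: "J \<subseteq> I"
    and sr: "stable_range_one (R Quot J)"
  shows "stable_range_one (R Quot I)"
  unfolding stable_range_one_def
proof (intro ballI impI)
  interpret cring R by fact
  fix Aq Bq assume Aq: "Aq \<in> carrier (R Quot I)" and Bq: "Bq \<in> carrier (R Quot I)"
  obtain a where a: "a \<in> carrier R" "Aq = I +> a" using quot_carr[OF Aq] by blast
  obtain b where b: "b \<in> carrier R" "Bq = I +> b" using quot_carr[OF Bq] by blast
  assume "\<exists>Xq\<in>carrier (R Quot I). \<exists>Zq\<in>carrier (R Quot I).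
     Aq \<otimes>\<^bsub>R Quot I\<^esub> Xq \<oplus>\<^bsub>R Quot I\<^esub> Bq \<otimes>\<^bsub>R Quot I\<^esub> Zq = \<one>\<^bsub>R Quot I\<^esub>"
  then obtain Xq Zq where Xq: "Xq \<in> carrier (R Quot I)" and Zq: "Zq \<in> carrier (R Quot I)"
    and eq: "Aq \<otimes>\<^bsub>R Quot I\<^esub> Xq \<oplus>\<^bsub>R Quot I\<^esub> Bq \<otimes>\<^bsub>R Quot I\<^esub> Zq = \<one>\<^bsub>R Quot I\<^esub>" by blast
  obtain x where x: "x \<in> carrier R" "Xq = I +> x" using quot_carr[OF Xq] by blast
  obtain z where z: "z \<in> carrier R" "Zq = I +> z" using quot_carr[OF Zq] by blast
  have "I +> (a \<otimes> x \<oplus> b \<otimes> z) = I +> \<one>"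
    using eq a b x z quot_ops[OF R I] by simp
  hence iI: "a \<otimes> x \<oplus> b \<otimes> z \<ominus> \<one> \<in> I" using quot_eq[OF R I] a b x z by simp
  define i where "i = a \<otimes> x \<oplus> b \<otimes> z \<ominus> \<one>"
  have ic: "i \<in> carrier R" using iI i_def ideal.Icarr[OF I] by blast
  define b' where "b' = b \<otimes> z \<ominus> i"
  have b'c: "b' \<in> carrier R" using b'_def b z ic by simp
  have e1: "a \<otimes> x \<oplus> b' \<otimes> \<one> = \<one>" unfolding b'_def i_def using a b x z
    by algebra
  have "\<exists>Yq\<in>carrier (R Quot J). (J +> a) \<oplus>\<^bsub>R Quot J\<^esub> (J +> b') \<otimes>\<^bsub>R Quot J\<^esub> Yq \<in> Units (R Quot J)"
  proof -
    have "(J +> a) \<otimes>\<^bsub>R Quot J\<^esub> (J +> x) \<oplus>\<^bsub>R Quot J\<^esub> (J +> b') \<otimes>\<^bsub>R Quot J\<^esub> (J +> \<one>) = \<one>\<^bsub>R Quot J\<^esub>"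
      using quot_ops[OF R J] a x b'c e1 by simp
    then show ?thesis using sr unfolding stable_range_one_def
      using quot_ops[OF R J] a x b'c by (metis one_closed)
  qed
  then obtain Yq where Yq: "Yq \<in> carrier (R Quot J)"
    and U: "(J +> a) \<oplus>\<^bsub>R Quot J\<^esub> (J +> b') \<otimes>\<^bsub>R Quot J\<^esub> Yq \<in> Units (R Quot J)" by blast
  obtain y where y: "y \<in> carrier R" "Yq = J +> y" using quot_carr[OF Yq] by blast
  have U2: "J +> (a \<oplus> b' \<otimes> y) \<in> Units (R Quot J)" using U quot_ops[OF R J] a b'c y by simp
  then obtain Wq where Wq: "Wq \<in> carrier (R Quot J)"
    and WU: "(J +> (a \<oplus> b' \<otimes> y)) \<otimes>\<^bsub>R Quot J\<^esub> Wq = \<one>\<^bsub>R Quot J\<^esub>"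
    unfolding Units_def by blast
  obtain w where w: "w \<in> carrier R" "Wq = J +> w" using quot_carr[OF Wq] by blast
  have "J +> ((a \<oplus> b' \<otimes> y) \<otimes> w) = J +> \<one>" using WU w quot_ops[OF R J] a b'c y by simp
  hence jJ: "(a \<oplus> b' \<otimes> y) \<otimes> w \<ominus> \<one> \<in> I" using quot_eq[OF R J] a b'c y w JI by auto
  have ex: "(a \<oplus> b \<otimes> (z \<otimes> y)) \<otimes> w \<ominus> \<one> = ((a \<oplus> b' \<otimes> y) \<otimes> w \<ominus> \<one>) \<oplus> i \<otimes> (y \<otimes> w)"
    unfolding b'_def using a b z y w ic by algebra
  have "i \<otimes> (y \<otimes> w) \<in> I" using iI i_def ideal.I_r_closed[OF I] y w by simp
  hence "(a \<oplus> b \<otimes> (z \<otimes> y)) \<otimes> w \<ominus> \<one> \<in> I" using ex jJ ideal.axioms(1)[OF I]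
    additive_subgroup.a_closed by metis
  hence "I +> (a \<oplus> b \<otimes> (z \<otimes> y)) \<in> Units (R Quot I)"
    using quot_unit[OF R I] a b z y w by simp
  thus "\<exists>Yq\<in>carrier (R Quot I). Aq \<oplus>\<^bsub>R Quot I\<^esub> Bq \<otimes>\<^bsub>R Quot I\<^esub> Yq \<in> Units (R Quot I)"
    using a b quot_ops[OF R I] z y by (metis m_closed)
qed

lemma stable_div:
  fixes R (structure)
  assumes R: "cring R" and a: "a \<in> carrier R" and s: "s \<in> carrier R"
    and st: "stable_elem R (a \<otimes>\<^bsub>R\<^esub> s)"
  shows "stable_elem R a"
proof -
  interpret cring R by fact
  have "PIdl (a \<otimes> s) \<subseteq> PIdl a" unfolding cgenideal_def using a s
    by (auto, metis m_assoc m_closed m_comm)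
  thus ?thesis using st sr_mono[OF R cgenideal_ideal[OF a] cgenideal_ideal] a s
    unfolding stable_elem_def by blast
qed

theorem theorem2p9:
  fixes R (structure)
  assumes "cring R"
    and "\<forall>a \<in> carrier R. stable_elem R a \<or> stable_elem R (\<one> \<ominus> a)"
  shows "locally_stable R"
  unfolding locally_stable_def
proof (intro ballI impI)
  interpret cring R by fact
  fix a b assume a: "a \<in> carrier R" and b: "b \<in> carrier R"
  assume "\<exists>x\<in>carrier R. \<exists>z\<in>carrier R. a \<otimes> x \<oplus> b \<otimes> z = \<one>"
  then obtain x z where x: "x \<in> carrier R" and z: "z \<in> carrier R"
    and e: "a \<otimes> x \<oplus> b \<otimes> z = \<one>" by blast
  define t where "t = a \<otimes> (x \<ominus> \<one>)"
  have tc: "t \<in> carrier R" using t_def a x by simp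
  have "\<one> \<ominus> t = a \<otimes> x \<oplus> b \<otimes> z \<ominus> a \<otimes> (x \<ominus> \<one>)" using e t_def by simp
  also have "\<dots> = a \<oplus> b \<otimes> z" using a b x z by algebra
  finally have t1: "\<one> \<ominus> t = a \<oplus> b \<otimes> z" .
  have a0: "a \<oplus> b \<otimes> \<zero> = a" using a b by simp
  from assms(2) tc have "stable_elem R t \<or> stable_elem R (\<one> \<ominus> t)" by blast
  thus "\<exists>y\<in>carrier R. stable_elem R (a \<oplus> b \<otimes> y)"
  proof
    assume "stable_elem R t"
    hence "stable_elem R a" using stable_div[OF assms(1) a, of "x \<ominus> \<one>"] t_def x by simp
    thus ?thesis using a0 zero_closed by metis
  next
    assume "stable_elem R (\<one> \<ominus> t)"
    thus ?thesis using t1 z by metis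
  qed
qed

end
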